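(* Let $\mathcal{N}>0$ be real, let $n\ge 0$ be an integer, and put $N=\mathcal{N}+\tfrac12-n$. Then the Cari\~{n}ena polynomial $\mathcal{H}_n^{\mathcal{N}}$ and the relativistic Hermite polynomial $H_n^{N}$ satisfy \[ \mathcal{H}_{n}^{\mathcal{N}}(X)=\left(\frac{N}{\mathcal{N}}\right)^{\frac{n}{2}}H_{n}^{N}\!\left(X\sqrt{\frac{N}{\mathcal{N}}}\right). \]
   Context: For a real parameter $N\neq 0$ and an integer $n\ge0$, the relativistic Hermite polynomial of degree $n$ is defined by the Rodrigues formula \[ H_n^N(X)=(-1)^n\left(1+\frac{X^2}{N}\right)^{N+n}\frac{d^n}{dX^n}\left(1+\frac{X^2}{N}\right)^{-N}; \] the right-hand side is a polynomial in $X$ (e.g. $H_0^N=1$, $H_1^N=2X$, $H_2^N=2(-1+X^2(2+\frac1N))$). For a real parameter $\mathcal{N}>0$ and integer $n\ge0$, the Cari\~{n}ena polynomial of degree $n$ is defined by \[ \mathcal{H}_n^{\mathcal{N}}(X)=(-1)^n\left(1+\frac{X^2}{\mathcal{N}}\right)^{\mathcal{N}+\frac12}\frac{d^n}{dX^n}\left(1+\frac{X^2}{\mathcal{N}}\right)^{n-\mathcal{N}-\frac12},\qquad X\in\mathbb{R}. \] Both sides of the claimed identity are regarded as polynomials in $X$. *)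

theory Defs
  imports "HOL-Analysis.Analysis" "HOL-Computational_Algebra.Polynomial"
begin

text \<open>Relativistic Hermite polynomial H_n^N (N nonzero), defined by the Rodrigues
formula: the unique real polynomial agreeing with the Rodrigues expression on the
(nonempty open) set of reals X where 1 + X^2/N > 0.\<close>
definition rel_hermite :: "nat \<Rightarrow> real \<Rightarrow> real poly" where
  "rel_hermite n N = (THE p. \<forall>X::real. 1 + X^2 / N > 0 \<longrightarrow>
      poly p X = (-1)^n * (1 + X^2 / N) powr (N + real n) *
        (deriv ^^ n) (\<lambda>x. (1 + x^2 / N) powr (- N)) X)"

definition carinena :: "nat \<Rightarrow> real \<Rightarrow> real poly" where
  "carinena n NN = (THE p. \<forall>X::real.
      poly p X = (-1)^n * (1 + X^2 / NN) powr (NN + 1/2) *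
        (deriv ^^ n) (\<lambda>x. (1 + x^2 / NN) powr (real n - NN - 1/2)) X)"

end

theory Submission
  imports Defs
begin

fun Pr :: "'a::field \<Rightarrow> 'a \<Rightarrow> nat \<Rightarrow> 'a poly" where
  "Pr b a 0 = 1"
| "Pr b a (Suc n) = pderiv (Pr b a n) * [:1,0,b:] + smult (a - of_nat n) (Pr b a n * [:0, 2*b:])"

lemma map_add_R: "map_poly complex_of_real (p + q) = map_poly complex_of_real p + map_poly complex_of_real q"
  by (intro poly_eqI) (simp add: coeff_map_poly)

lemma map_smult_R: "map_poly complex_of_real (smult a p) = smult (of_real a) (map_poly complex_of_real p)"
  by (intro poly_eqI) (simp add: coeff_map_poly)

lemma map_pderiv_R: "map_poly complex_of_real (pderiv p) = pderiv (map_poly complex_of_real p)"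
  by (intro poly_eqI) (simp add: coeff_map_poly coeff_pderiv)

lemma map_mult_R: "map_poly complex_of_real (p * q) = map_poly complex_of_real p * map_poly complex_of_real q"
proof (induction p)
  case 0 then show ?case by simp
next
  case (pCons a p)
  then show ?case by (simp add: map_add_R map_smult_R map_poly_pCons)
qed

lemma map_Pr: "map_poly complex_of_real (Pr b a n) = Pr (of_real b) (of_real a) n"
  by (induction n) (simp_all add: map_add_R map_smult_R map_mult_R map_pderiv_R map_poly_pCons)

lemma Pr_scale:
  fixes b1 b2 c :: "'a::field"
  assumes "b2 * c^2 = b1"
  shows "Pr b1 a n = smult (c^n) (pcompose (Pr b2 a n) [:0, c:])"
proof (induction n)
  case 0 then show ?case by (simp add: one_pCons pcompose_pCons)
next
  case (Suc n)
  have b1: "b1 = b2*c*c" using assms by (simp add: power2_eq_square mult.assoc)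
  have q: "pcompose [:1,0,b2:] [:0,c:] = [:1,0,b1:]"
    using b1 by (simp add: pcompose_pCons)
  have q': "smult c (pcompose [:0,2*b2:] [:0,c:]) = [:0, 2*b1:]"
    using b1 by (simp add: pcompose_pCons algebra_simps)
  have d: "pderiv (pcompose (Pr b2 a n) [:0, c:]) = smult c (pcompose (pderiv (Pr b2 a n)) [:0, c:])"
    by (simp add: pderiv_pcompose pderiv_pCons)
  have "Pr b1 a (Suc n) = smult (c^n) (smult c (pcompose (pderiv (Pr b2 a n)) [:0, c:])) * [:1,0,b1:]
     + smult (a - of_nat n) (smult (c^n) (pcompose (Pr b2 a n) [:0, c:]) * smult c (pcompose [:0,2*b2:] [:0,c:]))"
    by (simp only: Pr.simps Suc pderiv_smult d q')
  also have "\<dots> = smult (c^Suc n) ((pcompose (pderiv (Pr b2 a n)) [:0, c:]) * [:1,0,b1:]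
      + smult (a - of_nat n) (pcompose (Pr b2 a n) [:0, c:] * pcompose [:0,2*b2:] [:0,c:]))"
    by (simp only: mult_smult_left mult_smult_right smult_smult smult_add_right mult.commute[of "c^n" c] power_Suc mult.commute[of "a - of_nat n"])
  also have "\<dots> = smult (c^Suc n) (pcompose (Pr b2 a (Suc n)) [:0, c:])"
    by (simp only: Pr.simps pcompose_add pcompose_mult pcompose_smult q)
  finally show ?case .
qed

lemma deriv_Pr:
  fixes b a :: real
  shows "1 + x^2*b > 0 \<Longrightarrow> (deriv^^n) (\<lambda>x. (1 + x^2*b) powr a) x
           = poly (Pr b a n) x * (1 + x^2*b) powr (a - real n)"
proof (induction n arbitrary: x)
  case 0 then show ?case by simp
next
  case (Suc n)
  define S where "S = {y::real. 0 < 1 + y^2*b}"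
  have oS: "open S" unfolding S_def
    by (intro open_Collect_less continuous_intros)
  have xS: "x \<in> S" using Suc.prems S_def by simp
  define Q where "Q = 1 + x^2*b"
  have Qp: "Q > 0" using Suc.prems Q_def by simp
  have dQ: "((\<lambda>y. 1 + y^2*b) has_real_derivative 2*x*b) (at x)"
    by (auto intro!: derivative_eq_intros)
  have dpow: "((\<lambda>y. (1 + y^2*b) powr (a - real n)) has_real_derivative
       (a - real n) * Q powr (a - real n - 1) * (2*x*b)) (at x)"
    using DERIV_fun_powr[OF dQ, of "a - real n"] Suc.prems unfolding Q_def by simp
  have dg: "((\<lambda>y. poly (Pr b a n) y * (1 + y^2*b) powr (a - real n)) has_real_derivative
       poly (pderiv (Pr b a n)) x * Q powr (a - real n) + poly (Pr b a n) x * ((a - real n) * Q powr (a - real n - 1) * (2*x*b))) (at x)"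
    using DERIV_mult[OF poly_DERIV dpow] unfolding Q_def by (simp add: algebra_simps)
  have dh: "((deriv^^n) (\<lambda>x. (1 + x^2*b) powr a) has_real_derivative
       poly (pderiv (Pr b a n)) x * Q powr (a - real n) + poly (Pr b a n) x * ((a - real n) * Q powr (a - real n - 1) * (2*x*b))) (at x)"
    by (rule has_field_derivative_transform_within_open[OF dg oS xS]) (simp add: Suc.IH S_def)
  have QQ: "Q powr (a - real n) = Q powr (a - real n - 1) * Q"
  proof -
    have "Q powr (a - real n - 1) * Q powr 1 = Q powr (a - real n - 1 + 1)" by (rule powr_add[symmetric])
    then show ?thesis using Qp by simp
  qed
  have "(deriv^^Suc n) (\<lambda>x. (1 + x^2*b) powr a) x = deriv ((deriv^^n) (\<lambda>x. (1 + x^2*b) powr a)) x"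
    by simp
  also have "\<dots> = poly (pderiv (Pr b a n)) x * Q powr (a - real n) + poly (Pr b a n) x * ((a - real n) * Q powr (a - real n - 1) * (2*x*b))"
    by (rule DERIV_imp_deriv[OF dh])
  also have "\<dots> = poly (Pr b a (Suc n)) x * Q powr (a - real (Suc n))"
    unfolding QQ by (simp add: Q_def algebra_simps power2_eq_square)
  finally show ?case unfolding Q_def .
qed

lemma poly_eq_on_infinite:
  fixes p q :: "real poly"
  assumes "infinite S" "\<And>x. x \<in> S \<Longrightarrow> poly p x = poly q x"
  shows "p = q"
proof (rule ccontr)
  assume "p \<noteq> q"
  then have "finite {x. poly (p - q) x = 0}" by (intro poly_roots_finite) simp
  moreover have "S \<subseteq> {x. poly (p - q) x = 0}" using assms(2) by auto
  ultimately show False using assms(1) finite_subset by blast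
qed

lemma carinena_Pr:
  assumes "NN > 0"
  shows "carinena n NN = smult ((-1)^n) (Pr (1/NN) (real n - NN - 1/2) n)"
proof -
  have fe: "(\<lambda>x. (1 + x^2 / NN) powr (real n - NN - 1/2)) = (\<lambda>x. (1 + x^2 * (1/NN)) powr (real n - NN - 1/2))"
    by simp
  have key: "poly (smult ((-1)^n) (Pr (1/NN) (real n - NN - 1/2) n)) X =
      (-1)^n * (1 + X^2 / NN) powr (NN + 1/2) *
        (deriv ^^ n) (\<lambda>x. (1 + x^2 / NN) powr (real n - NN - 1/2)) X" for X
  proof -
    have pos: "1 + X^2 * (1/NN) > 0" using assms by (simp add: add_pos_nonneg)
    have "(1 + X^2 * (1/NN)) powr (NN + 1/2) * (1 + X^2 * (1/NN)) powr (real n - NN - 1/2 - real n) = 1"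
      using pos by (simp add: powr_add[symmetric])
    then show ?thesis unfolding fe deriv_Pr[OF pos] by (simp add: algebra_simps)
  qed
  show ?thesis unfolding carinena_def
    by (rule the_equality) (use key in \<open>auto intro: poly_ext\<close>)
qed

lemma rel_hermite_Pr:
  assumes "N \<noteq> 0"
  shows "rel_hermite n N = smult ((-1)^n) (Pr (1/N) (- N) n)"
proof -
  have fe: "(\<lambda>x. (1 + x^2 / N) powr (- N)) = (\<lambda>x. (1 + x^2 * (1/N)) powr (- N))"
    by simp
  have key: "1 + X^2 / N > 0 \<Longrightarrow> poly (smult ((-1)^n) (Pr (1/N) (- N) n)) X =
      (-1)^n * (1 + X^2 / N) powr (N + real n) *
        (deriv ^^ n) (\<lambda>x. (1 + x^2 / N) powr (- N)) X" for X
  proof -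
    assume h: "1 + X^2 / N > 0"
    have pos: "1 + X^2 * (1/N) > 0" using h by simp
    have "(1 + X^2 * (1/N)) powr (N + real n) * (1 + X^2 * (1/N)) powr (- N - real n) = 1"
      using pos by (simp add: powr_add[symmetric])
    then show ?thesis unfolding fe deriv_Pr[OF pos] by (simp add: algebra_simps)
  qed
  define d where "d = sqrt \<bar>N\<bar>"
  have dpos: "d > 0" using assms d_def by simp
  have sub: "{0<..<d} \<subseteq> {X. 1 + X^2 / N > 0}"
  proof
    fix X assume X: "X \<in> {0<..<d}"
    then have "X^2 < d^2" by (intro power_strict_mono) auto
    then have X2: "X^2 < \<bar>N\<bar>" using d_def by simp
    show "X \<in> {X. 1 + X^2 / N > 0}"
    proof (cases "N > 0")
      case True then show ?thesis by (simp add: add_pos_nonneg)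
    next
      case False
      then have "N < 0" using assms by simp
      then have "X^2 / N > -1" using X2 by (simp add: field_simps)
      then show ?thesis by simp
    qed
  qed
  have inf: "infinite {X. 1 + X^2 / N > 0}"
    using infinite_Ioo[OF dpos] sub finite_subset by blast
  show ?thesis unfolding rel_hermite_def
  proof (rule the_equality)
    show "\<forall>X. 1 + X^2 / N > 0 \<longrightarrow> poly (smult ((-1)^n) (Pr (1/N) (- N) n)) X =
      (-1)^n * (1 + X^2 / N) powr (N + real n) * (deriv ^^ n) (\<lambda>x. (1 + x^2 / N) powr (- N)) X"
      using key by blast
  next
    fix p assume "\<forall>X. 1 + X^2 / N > 0 \<longrightarrow> poly p X =
      (-1)^n * (1 + X^2 / N) powr (N + real n) * (deriv ^^ n) (\<lambda>x. (1 + x^2 / N) powr (- N)) X"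
    then show "p = smult ((-1)^n) (Pr (1/N) (- N) n)"
      using key by (intro poly_eq_on_infinite[OF inf]) auto
  qed
qed

theorem theorem1:
  fixes NN :: real and n :: nat
  assumes "NN > 0"
    and "NN + 1/2 - real n \<noteq> 0"
  shows "let N = NN + 1/2 - real n;
             c = csqrt (complex_of_real (N / NN))
         in map_poly complex_of_real (carinena n NN)
              = smult (c ^ n) (pcompose (map_poly complex_of_real (rel_hermite n N)) [:0, c:])"
proof -
  define N where "N = NN + 1/2 - real n"
  define c where "c = csqrt (complex_of_real (N / NN))"
  have N0: "N \<noteq> 0" using assms N_def by simp
  have a: "real n - NN - 1/2 = - N" using N_def by simp
  have c2: "complex_of_real (1/N) * c^2 = complex_of_real (1/NN)"
    using N0 assms unfolding c_def by (simp add: field_simps)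
  have "map_poly complex_of_real (carinena n NN)
      = smult ((-1)^n) (Pr (complex_of_real (1/NN)) (complex_of_real (-N)) n)"
    unfolding carinena_Pr[OF assms(1)] a by (simp add: map_smult_R map_Pr)
  also have "\<dots> = smult ((-1)^n) (smult (c^n) (pcompose (Pr (complex_of_real (1/N)) (complex_of_real (-N)) n) [:0, c:]))"
    by (subst Pr_scale[OF c2]) rule
  also have "\<dots> = smult (c ^ n) (pcompose (map_poly complex_of_real (rel_hermite n N)) [:0, c:])"
    unfolding rel_hermite_Pr[OF N0] by (simp add: map_smult_R map_Pr pcompose_smult mult.commute)
  finally show ?thesis unfolding N_def c_def Let_def .
qed

end
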